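(* Let $\mathcal F\subseteq 2^{[n]}$ be a simply rooted family of sets such that $\emptyset\in\mathcal F$. For $0\le k\le n$ let $\mathcal C_k(\mathcal F)=\{[A,B]: A\subseteq B,\ [A,B]\subseteq\mathcal F,\ |B\setminus A|=k\}$. Then $$\sum_{k=0}^n (-1)^k|\mathcal C_k(\mathcal F)|=1.$$
   Context: $[n]=\{1,\dots,n\}$, $2^{[n]}$ its power set, and $[A,B]=\{C\in 2^{[n]}: A\subseteq C\subseteq B\}$; $[i,A]$ means $[\{i\},A]$. A family $\mathcal F\subseteq 2^{[n]}$ is simply rooted if for every non-empty $A\in\mathcal F$ there is $i\in A$ with $[i,A]\subseteq\mathcal F$. *)

theory Defs
  imports Main
begin

definition interval :: "nat set \<Rightarrow> nat set \<Rightarrow> nat set set" where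
  "interval A B = {C. A \<subseteq> C \<and> C \<subseteq> B}"

definition simply_rooted :: "nat set set \<Rightarrow> bool" where
  "simply_rooted F \<longleftrightarrow> (\<forall>A\<in>F. A \<noteq> {} \<longrightarrow> (\<exists>i\<in>A. interval {i} A \<subseteq> F))"

text \<open>An interval with A \<subseteq> B is determined by its endpoints, so we record it as
  the set of intervals (sets of sets).\<close>
definition intervals_k :: "nat set set \<Rightarrow> nat \<Rightarrow> nat set set set" where
  "intervals_k F k = {interval A B | A B. A \<subseteq> B \<and> interval A B \<subseteq> F \<and> card (B - A) = k}"

end

theory Submission
  imports Defs
begin

lemma alt_pow:
  assumes "finite T"
  shows "(\<Sum>X\<in>Pow T. (-1::int) ^ card (T - X)) = (if T = {} then 1 else 0)"
proof -
  have "(\<Prod>x\<in>T. (1::int) - 1) = (\<Sum>X\<in>Pow T. (-1) ^ (card T - card X) * (\<Prod>x\<in>X. 1) * (\<Prod>x\<in>T-X. 1))"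
    by (rule prod_diff_conv_sum'[OF assms])
  also have "\<dots> = (\<Sum>X\<in>Pow T. (-1::int) ^ card (T - X))"
    using assms by (intro sum.cong refl) (auto simp: card_Diff_subset finite_subset)
  finally have e: "(\<Sum>X\<in>Pow T. (-1::int) ^ card (T - X)) = (\<Prod>x\<in>T. (1::int) - 1)" ..
  show ?thesis unfolding e using assms by (cases "T = {}") (auto simp: prod_zero_iff)
qed

definition cc :: "nat set set \<Rightarrow> nat set \<Rightarrow> int" where
  "cc F B = (\<Sum>A\<in>{A. A \<subseteq> B \<and> interval A B \<subseteq> F}. (-1::int) ^ card (B - A))"

lemma cc_zero:
  assumes "finite B" "simply_rooted F" "{} \<in> F"
  shows "cc F B = (if B = {} then 1 else 0)"
  using assms
proof (induction "card B" arbitrary: B rule: less_induct)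
  case less
  show ?case
  proof (cases "B = {}")
    case True
    have "{A. A \<subseteq> B \<and> interval A B \<subseteq> F} = {{}}"
      using True less.prems by (auto simp: interval_def)
    then show ?thesis using True by (simp add: cc_def)
  next
    case Bne: False
    show ?thesis
    proof (cases "B \<in> F")
      case False
      have "{A. A \<subseteq> B \<and> interval A B \<subseteq> F} = {}"
        using False by (auto simp: interval_def)
      then show ?thesis using Bne unfolding cc_def by (simp only: sum.empty) simp
    next
      case True
      then obtain i where i: "i \<in> B" "interval {i} B \<subseteq> F"
        using less.prems Bne unfolding simply_rooted_def by blast
      define B' where "B' = B - {i}"
      have fB: "finite B'" using less.prems by (simp add: B'_def)
      have cB: "card B' < card B" using less.prems i by (metis B'_def card_Diff1_less)
      have IH: "cc F B' = (if B' = {} then 1 else 0)"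
        using less.hyps[OF cB fB less.prems(2,3)] .
      define S1 where "S1 = insert i ` Pow B'"
      define S2 where "S2 = {A. A \<subseteq> B' \<and> interval A B' \<subseteq> F}"
      have split: "{A. A \<subseteq> B \<and> interval A B \<subseteq> F} = S1 \<union> S2"
      proof (intro equalityI subsetI)
        fix A assume A: "A \<in> {A. A \<subseteq> B \<and> interval A B \<subseteq> F}"
        show "A \<in> S1 \<union> S2"
        proof (cases "i \<in> A")
          case True
          then have "A = insert i (A - {i})" by auto
          moreover have "A - {i} \<in> Pow B'" using A by (auto simp: B'_def)
          ultimately show ?thesis unfolding S1_def by blast
        next
          case False
          have "interval A B' \<subseteq> interval A B" by (auto simp: interval_def B'_def)
          then show ?thesis using A False by (auto simp: S2_def B'_def)
        qed
      next
        fix A assume A: "A \<in> S1 \<union> S2"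
        show "A \<in> {A. A \<subseteq> B \<and> interval A B \<subseteq> F}"
        proof (cases "A \<in> S1")
          case True
          then have "i \<in> A" "A \<subseteq> B" using i by (auto simp: S1_def B'_def)
          moreover have "interval A B \<subseteq> interval {i} B" using \<open>i \<in> A\<close> by (auto simp: interval_def)
          ultimately show ?thesis using i by auto
        next
          case False
          then have A2: "A \<subseteq> B'" "interval A B' \<subseteq> F" using A by (auto simp: S2_def)
          have "interval A B \<subseteq> F"
          proof
            fix C assume C: "C \<in> interval A B"
            show "C \<in> F"
            proof (cases "i \<in> C")
              case True
              then have "C \<in> interval {i} B" using C by (auto simp: interval_def)
              then show ?thesis using i by auto
            next
              case False
              then have "C \<in> interval A B'" using C by (auto simp: interval_def B'_def)
              then show ?thesis using A2 by auto
            qed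
          qed
          then show ?thesis using A2 by (auto simp: B'_def)
        qed
      qed
      have disj: "S1 \<inter> S2 = {}" by (auto simp: S1_def S2_def B'_def)
      have fS1: "finite S1" using fB by (simp add: S1_def)
      have fS2: "finite S2" using fB by (rule finite_subset[rotated, OF finite_Pow_iff[THEN iffD2]]) (auto simp: S2_def)
      have s1: "(\<Sum>A\<in>S1. (-1::int) ^ card (B - A)) = (if B' = {} then 1 else 0)"
      proof -
        have inj: "inj_on (insert i) (Pow B')"
          by (rule inj_onI) (auto simp: B'_def)
        have "(\<Sum>A\<in>S1. (-1::int) ^ card (B - A)) = (\<Sum>X\<in>Pow B'. (-1::int) ^ card (B - insert i X))"
          unfolding S1_def by (rule sum.reindex[OF inj, unfolded comp_def])
        also have "\<dots> = (\<Sum>X\<in>Pow B'. (-1::int) ^ card (B' - X))"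
          proof (intro sum.cong refl)
          fix X show "(-1::int) ^ card (B - insert i X) = (-1::int) ^ card (B' - X)"
            by (rule arg_cong[where f="\<lambda>m. (-1::int) ^ card m"]) (auto simp: B'_def)
        qed
        finally show ?thesis using alt_pow[OF fB] by simp
      qed
      have s2: "(\<Sum>A\<in>S2. (-1::int) ^ card (B - A)) = - cc F B'"
      proof -
        have "(\<Sum>A\<in>S2. (-1::int) ^ card (B - A)) = (\<Sum>A\<in>S2. - ((-1::int) ^ card (B' - A)))"
        proof (intro sum.cong refl)
          fix A assume "A \<in> S2"
          then have "A \<subseteq> B'" by (auto simp: S2_def)
          then have "B - A = insert i (B' - A)" "i \<notin> B' - A" using i by (auto simp: B'_def)
          moreover have "finite (B' - A)" using fB by auto
          ultimately show "(-1::int) ^ card (B - A) = - ((-1::int) ^ card (B' - A))" by simp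
        qed
        also have "\<dots> = - cc F B'" by (simp add: cc_def S2_def sum_negf)
        finally show ?thesis .
      qed
      have "cc F B = (\<Sum>A\<in>S1. (-1::int) ^ card (B - A)) + (\<Sum>A\<in>S2. (-1::int) ^ card (B - A))"
        unfolding cc_def split by (rule sum.union_disjoint[OF fS1 fS2 disj])
      then show ?thesis using s1 s2 IH Bne by simp
    qed
  qed
qed

theorem corollary1:
  fixes n :: nat and F :: "nat set set"
  assumes "F \<subseteq> Pow {1..n}"
    and "simply_rooted F"
    and "{} \<in> F"
  shows "(\<Sum>k=0..n. (-1::int) ^ k * int (card (intervals_k F k))) = 1"
proof -
  define S where "S B = {A. A \<subseteq> B \<and> interval A B \<subseteq> F}" for B
  define P where "P = Sigma F S"
  define h where "h p = card (fst p - snd p)" for p :: "nat set \<times> nat set"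
  have fF: "finite F" using assms(1) by (rule finite_subset) simp
  have fB: "finite B" if "B \<in> F" for B using that assms(1) by (meson PowD finite_atLeastAtMost finite_subset subsetD)
  have fS: "finite (S B)" if "B \<in> F" for B
    using fB[OF that] by (rule finite_subset[rotated, OF finite_Pow_iff[THEN iffD2]]) (auto simp: S_def)
  have fP: "finite P" unfolding P_def using fF fS by auto
  have inj: "inj_on (\<lambda>(B, A). interval A B) P"
  proof (rule inj_onI, clarify)
    fix B A B' A' assume p: "(B, A) \<in> P" "(B', A') \<in> P" and eq: "interval A B = interval A' B'"
    have s: "A \<subseteq> B" "A' \<subseteq> B'" using p by (auto simp: P_def S_def)
    have "A \<in> interval A' B'" "A' \<in> interval A B" "B \<in> interval A' B'" "B' \<in> interval A B"
      using s eq[symmetric] eq by (auto simp: interval_def)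
    then show "B = B' \<and> A = A'" by (auto simp: interval_def)
  qed
  have ik: "intervals_k F k = (\<lambda>(B, A). interval A B) ` {p\<in>P. h p = k}" for k
  proof (intro equalityI subsetI)
    fix X assume "X \<in> intervals_k F k"
    then obtain A B where "X = interval A B" "A \<subseteq> B" "interval A B \<subseteq> F" "card (B - A) = k"
      unfolding intervals_k_def by blast
    moreover then have "B \<in> F" by (auto simp: interval_def)
    ultimately have "(B, A) \<in> {p\<in>P. h p = k}" "X = (\<lambda>(B, A). interval A B) (B, A)"
      by (auto simp: P_def S_def h_def)
    then show "X \<in> (\<lambda>(B, A). interval A B) ` {p\<in>P. h p = k}" by blast
  next
    fix X assume "X \<in> (\<lambda>(B, A). interval A B) ` {p\<in>P. h p = k}"
    then obtain B A where "(B, A) \<in> P" "h (B, A) = k" "X = interval A B" by auto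
    then show "X \<in> intervals_k F k" unfolding intervals_k_def P_def S_def h_def by auto
  qed
  have card_ik: "card (intervals_k F k) = card {p\<in>P. h p = k}" for k
    unfolding ik by (rule card_image) (rule inj_on_subset[OF inj], auto)
  have "(\<Sum>k=0..n. (-1::int) ^ k * int (card (intervals_k F k)))
      = (\<Sum>k=0..n. (\<Sum>p\<in>{p\<in>P. h p = k}. (-1::int) ^ h p))"
    by (intro sum.cong refl) (simp add: card_ik)
  also have "\<dots> = (\<Sum>p\<in>P. (-1::int) ^ h p)"
  proof (rule sum.group[OF fP])
    show "h ` P \<subseteq> {0..n}"
    proof
      fix k assume "k \<in> h ` P"
      then obtain B A where p: "(B, A) \<in> P" "k = card (B - A)" by (auto simp: h_def)
      then have "B \<subseteq> {1..n}" using assms(1) by (auto simp: P_def)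
      then have "card (B - A) \<le> card {1..n}" by (intro card_mono) auto
      then show "k \<in> {0..n}" using p by simp
    qed
  qed simp
  also have "\<dots> = (\<Sum>B\<in>F. cc F B)"
  proof -
    have "(\<Sum>B\<in>F. \<Sum>A\<in>S B. (-1::int) ^ card (B - A)) = (\<Sum>(B, A)\<in>Sigma F S. (-1::int) ^ card (B - A))"
      by (rule sum.Sigma) (use fF fS in auto)
    also have "\<dots> = (\<Sum>p\<in>P. (-1::int) ^ h p)"
      unfolding P_def h_def by (intro sum.cong refl) auto
    finally show ?thesis unfolding cc_def S_def by simp
  qed
  also have "\<dots> = (\<Sum>B\<in>F. if B = {} then 1 else 0)"
    by (intro sum.cong refl) (simp add: cc_zero[OF fB assms(2,3)])
  also have "\<dots> = 1" using fF assms(3) by (simp add: sum.delta)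
  finally show ?thesis .
qed

end
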